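(* There is a constant $\epsilon_0>0$ such that for every $0<\epsilon\le\epsilon_0$ and all sufficiently large $n$, for all but an $o(1)$ fraction of the subsets $P\subseteq\{0,1\}^n$ with $|P|=2^{n/20}$, no quantum property tester for $P$ with distance parameter $\epsilon$ makes at most $n/400$ queries. In particular, most properties with $2^{n/20}$ elements require quantum property testers with $\Omega(n)$ queries.
   Context: $x\in\{0,1\}^n$ is $\epsilon$-far from $P$ if it differs from every element of $P$ in more than $\epsilon n$ positions. A quantum property tester for $P$ with distance parameter $\epsilon$ is a quantum algorithm accessing $x$ through the oracle $O_x:\lvert i,b,z\rangle\mapsto\lvert i,b\oplus x_i,z\rangle$ that accepts every $x\in P$ with probability $\ge2/3$ and every $\epsilon$-far $x$ with probability $\le1/3$; its complexity is the number of oracle queries. *)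

theory Defs
  imports Complex_Main
begin

(* Inputs x in {0,1}^n are boolean lists of length n (True = 1).
 The Hilbert space of a query algorithm with workspace dimension m has
 computational basis |i,b,z> with i < n, b a bit, z < m.*)

type_synonym qbasis = "nat \<times> bool \<times> nat"
type_synonym qvec = "qbasis \<Rightarrow> complex"
type_synonym qmat = "qbasis \<Rightarrow> qbasis \<Rightarrow> complex"

definition cube :: "nat \<Rightarrow> bool list set" where
  "cube n = {x. length x = n}"

definition hamming :: "nat \<Rightarrow> bool list \<Rightarrow> bool list \<Rightarrow> nat" where
  "hamming n x y = card {i. i < n \<and> x ! i \<noteq> y ! i}"

definition eps_far :: "nat \<Rightarrow> real \<Rightarrow> bool list set \<Rightarrow> bool list \<Rightarrow> bool" where
  "eps_far n \<epsilon> P x \<longleftrightarrow> (\<forall>y\<in>P. real (hamming n x y) > \<epsilon> * real n)"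

definition qbase :: "nat \<Rightarrow> nat \<Rightarrow> qbasis set" where
  "qbase n m = {0..<n} \<times> UNIV \<times> {0..<m}"

definition mat_app :: "qbasis set \<Rightarrow> qmat \<Rightarrow> qvec \<Rightarrow> qvec" where
  "mat_app B U v = (\<lambda>s. if s \<in> B then (\<Sum>t\<in>B. U s t * v t) else 0)"

definition unitary_on :: "qbasis set \<Rightarrow> qmat \<Rightarrow> bool" where
  "unitary_on B U \<longleftrightarrow>
     (\<forall>s\<in>B. \<forall>t\<in>B. (\<Sum>r\<in>B. cnj (U r s) * U r t) = (if s = t then 1 else 0))"

definition query_op :: "bool list \<Rightarrow> qvec \<Rightarrow> qvec" where
  "query_op x v = (\<lambda>(i, b, z). v (i, b \<noteq> x ! i, z))"

definition init_state :: qvec where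
  "init_state = (\<lambda>s. if s = (0, False, 0) then 1 else 0)"

fun qstate :: "nat \<Rightarrow> nat \<Rightarrow> (nat \<Rightarrow> qmat) \<Rightarrow> bool list \<Rightarrow> nat \<Rightarrow> qvec" where
  "qstate n m U x 0 = mat_app (qbase n m) (U 0) init_state"
| "qstate n m U x (Suc k) = mat_app (qbase n m) (U (Suc k)) (query_op x (qstate n m U x k))"

definition accept_prob ::
  "nat \<Rightarrow> nat \<Rightarrow> (nat \<Rightarrow> qmat) \<Rightarrow> qbasis set \<Rightarrow> nat \<Rightarrow> bool list \<Rightarrow> real" where
  "accept_prob n m U Acc T x = (\<Sum>s\<in>qbase n m \<inter> Acc. (cmod (qstate n m U x T s))\<^sup>2)"

definition quantum_tester ::
  "nat \<Rightarrow> bool list set \<Rightarrow> real \<Rightarrow> nat \<Rightarrow> (nat \<Rightarrow> qmat) \<Rightarrow> qbasis set \<Rightarrow> nat \<Rightarrow> bool" where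
  "quantum_tester n P \<epsilon> m U Acc T \<longleftrightarrow>
     m \<ge> 1 \<and> (\<forall>k\<le>T. unitary_on (qbase n m) (U k)) \<and>
     (\<forall>x\<in>cube n. x \<in> P \<longrightarrow> accept_prob n m U Acc T x \<ge> 2/3) \<and>
     (\<forall>x\<in>cube n. eps_far n \<epsilon> P x \<longrightarrow> accept_prob n m U Acc T x \<le> 1/3)"

definition has_tester_with_queries :: "nat \<Rightarrow> bool list set \<Rightarrow> real \<Rightarrow> real \<Rightarrow> bool" where
  "has_tester_with_queries n P \<epsilon> q \<longleftrightarrow>
     (\<exists>m U Acc T. real T \<le> q \<and> quantum_tester n P \<epsilon> m U Acc T)"

definition props_of_size :: "nat \<Rightarrow> nat \<Rightarrow> bool list set set" where
  "props_of_size n k = {P. P \<subseteq> cube n \<and> card P = k}"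

end

theory Submission
  imports Defs "HOL-Real_Asymp.Real_Asymp"
begin


definition bm :: "nat set \<Rightarrow> bool list \<Rightarrow> 'a::comm_ring_1" where
  "bm S x = (\<Prod>i\<in>S. if x!i then 1 else 0)"

definition Pd :: "nat \<Rightarrow> nat \<Rightarrow> nat set set" where
  "Pd n d = {S. S \<subseteq> {..<n} \<and> card S \<le> d}"

definition pdeg :: "nat \<Rightarrow> nat \<Rightarrow> (bool list \<Rightarrow> complex) \<Rightarrow> bool" where
  "pdeg n d f \<longleftrightarrow> (\<exists>c. \<forall>x\<in>cube n. f x = (\<Sum>S\<in>Pd n d. c S * bm S x))"

lemma finite_Pd: "finite (Pd n d)"
  unfolding Pd_def by (rule finite_subset[of _ "Pow {..<n}"]) auto

lemma bm_alt: "finite S \<Longrightarrow> bm S x = (if \<forall>i\<in>S. x!i then 1 else 0)"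
  unfolding bm_def by (induction S rule: finite_induct) auto

lemma bm_empty[simp]: "bm {} x = 1"
  by (simp add: bm_def)

lemma bm_mult: "finite S \<Longrightarrow> finite S' \<Longrightarrow> bm S x * bm S' x = bm (S \<union> S') x"
  by (auto simp: bm_alt)

lemma bm_complex: "finite S \<Longrightarrow> (bm S x :: complex) = of_real (bm S x)"
  by (simp add: bm_alt)

lemma cnj_bm: "finite S \<Longrightarrow> cnj (bm S x) = bm S x"
  by (simp add: bm_alt)

lemma empty_Pd: "{} \<in> Pd n d"
  by (simp add: Pd_def)

lemma pdeg_cong: "pdeg n d f \<Longrightarrow> (\<And>x. x \<in> cube n \<Longrightarrow> f x = g x) \<Longrightarrow> pdeg n d g"
  unfolding pdeg_def by metis

lemma pdeg_mono: assumes "pdeg n d f" "d \<le> d'" shows "pdeg n d' f"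
proof -
  from assms obtain c where c: "\<forall>x\<in>cube n. f x = (\<Sum>S\<in>Pd n d. c S * bm S x)"
    unfolding pdeg_def by blast
  define c' where "c' S = (if S \<in> Pd n d then c S else 0)" for S
  have sub: "Pd n d \<subseteq> Pd n d'" using assms(2) by (auto simp: Pd_def)
  have "f x = (\<Sum>S\<in>Pd n d'. c' S * bm S x)" if "x \<in> cube n" for x
  proof -
    have "(\<Sum>S\<in>Pd n d'. c' S * bm S x) = (\<Sum>S\<in>Pd n d. c' S * bm S x)"
      by (rule sum.mono_neutral_right[OF finite_Pd sub]) (auto simp: c'_def)
    also have "\<dots> = (\<Sum>S\<in>Pd n d. c S * bm S x)" by (simp add: c'_def)
    finally show ?thesis using c that by simp
  qed
  then show ?thesis unfolding pdeg_def by blast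
qed

lemma pdeg_bm: "S \<in> Pd n d \<Longrightarrow> pdeg n d (bm S)"
  unfolding pdeg_def
  apply (rule exI[of _ "\<lambda>T. if T = S then 1 else 0"])
  apply (simp add: if_distrib[of "\<lambda>a. a * _"] sum.delta[OF finite_Pd] cong: if_cong)
  done

lemma pdeg_const: "pdeg n d (\<lambda>x. a)"
  unfolding pdeg_def
  apply (rule exI[of _ "\<lambda>T. if T = {} then a else 0"])
  apply (simp add: if_distrib[of "\<lambda>a. a * _"] sum.delta[OF finite_Pd] empty_Pd cong: if_cong)
  done

lemma pdeg_add: assumes "pdeg n d f" "pdeg n d g" shows "pdeg n d (\<lambda>x. f x + g x)"
proof -
  from assms obtain c c' where c: "\<forall>x\<in>cube n. f x = (\<Sum>S\<in>Pd n d. c S * bm S x)"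
    and c': "\<forall>x\<in>cube n. g x = (\<Sum>S\<in>Pd n d. c' S * bm S x)"
    unfolding pdeg_def by blast
  show ?thesis unfolding pdeg_def
    by (rule exI[of _ "\<lambda>S. c S + c' S"]) (simp add: c c' distrib_right sum.distrib)
qed

lemma pdeg_cmult: assumes "pdeg n d f" shows "pdeg n d (\<lambda>x. a * f x)"
proof -
  from assms obtain c where c: "\<forall>x\<in>cube n. f x = (\<Sum>S\<in>Pd n d. c S * bm S x)"
    unfolding pdeg_def by blast
  show ?thesis unfolding pdeg_def
    by (rule exI[of _ "\<lambda>S. a * c S"]) (simp add: c sum_distrib_left mult.assoc)
qed

lemma pdeg_sum: "finite I \<Longrightarrow> (\<And>i. i \<in> I \<Longrightarrow> pdeg n d (f i)) \<Longrightarrow> pdeg n d (\<lambda>x. \<Sum>i\<in>I. f i x)"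
proof (induction I rule: finite_induct)
  case empty
  then show ?case using pdeg_const[of n d 0] by simp
next
  case (insert a I)
  then show ?case by (simp add: pdeg_add)
qed

lemma pdeg_diff: "pdeg n d f \<Longrightarrow> pdeg n d g \<Longrightarrow> pdeg n d (\<lambda>x. f x - g x)"
  using pdeg_add[of n d f "\<lambda>x. (-1) * g x"] pdeg_cmult[of n d g "-1"] by simp

lemma pdeg_mult: assumes "pdeg n d1 f" "pdeg n d2 g" shows "pdeg n (d1 + d2) (\<lambda>x. f x * g x)"
proof -
  from assms obtain c c' where c: "\<forall>x\<in>cube n. f x = (\<Sum>S\<in>Pd n d1. c S * bm S x)"
    and c': "\<forall>x\<in>cube n. g x = (\<Sum>S\<in>Pd n d2. c' S * bm S x)"
    unfolding pdeg_def by blast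
  have eq: "f x * g x = (\<Sum>S\<in>Pd n d1. \<Sum>S'\<in>Pd n d2. (c S * c' S') * bm (S \<union> S') x)"
    if "x \<in> cube n" for x
  proof -
    have fin: "\<And>S. S \<in> Pd n d1 \<Longrightarrow> finite S" "\<And>S. S \<in> Pd n d2 \<Longrightarrow> finite S"
      by (auto simp: Pd_def intro: finite_subset)
    have "f x * g x = (\<Sum>S\<in>Pd n d1. \<Sum>S'\<in>Pd n d2. (c S * bm S x) * (c' S' * bm S' x))"
      using c c' that by (simp add: sum_product)
    also have "\<dots> = (\<Sum>S\<in>Pd n d1. \<Sum>S'\<in>Pd n d2. (c S * c' S') * bm (S \<union> S') x)"
      by (intro sum.cong refl) (simp add: bm_mult[symmetric] fin mult_ac)
    finally show ?thesis .
  qed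
  have "pdeg n (d1 + d2) (\<lambda>x. \<Sum>S\<in>Pd n d1. \<Sum>S'\<in>Pd n d2. (c S * c' S') * bm (S \<union> S') x)"
  proof (intro pdeg_sum finite_Pd pdeg_cmult pdeg_bm)
    fix S S' assume "S \<in> Pd n d1" "S' \<in> Pd n d2"
    then show "S \<union> S' \<in> Pd n (d1 + d2)"
      unfolding Pd_def using card_Un_le[of S S'] by auto
  qed
  then show ?thesis by (rule pdeg_cong) (simp add: eq)
qed

lemma pdeg_cnj: assumes "pdeg n d f" shows "pdeg n d (\<lambda>x. cnj (f x))"
proof -
  from assms obtain c where c: "\<forall>x\<in>cube n. f x = (\<Sum>S\<in>Pd n d. c S * bm S x)"
    unfolding pdeg_def by blast
  have fin: "\<And>S. S \<in> Pd n d \<Longrightarrow> finite S"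
    by (auto simp: Pd_def intro: finite_subset)
  show ?thesis unfolding pdeg_def
    by (rule exI[of _ "\<lambda>S. cnj (c S)"]) (simp add: c cnj_bm fin)
qed

lemma pdeg_if: assumes "i < n" "pdeg n k A" "pdeg n k B"
  shows "pdeg n (Suc k) (\<lambda>x. if x!i then A x else B x)"
proof -
  have "{i} \<in> Pd n 1" using assms(1) by (simp add: Pd_def)
  then have "pdeg n (1 + k) (\<lambda>x. bm {i} x * (A x - B x))"
    by (intro pdeg_mult pdeg_bm pdeg_diff assms)
  moreover have "pdeg n (1 + k) B" using assms(3) by (rule pdeg_mono) simp
  ultimately have "pdeg n (1 + k) (\<lambda>x. B x + bm {i} x * (A x - B x))"
    by (rule pdeg_add[rotated])
  then have "pdeg n (Suc k) (\<lambda>x. B x + bm {i} x * (A x - B x))" by simp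
  then show ?thesis by (rule pdeg_cong) (simp add: bm_def)
qed

lemma finite_qbase: "finite (qbase n m)"
  unfolding qbase_def by simp

lemma pdeg_qstate: "pdeg n k (\<lambda>x. qstate n m U x k s)"
proof (induction k arbitrary: s)
  case 0
  show ?case by (simp add: pdeg_const)
next
  case (Suc k)
  show ?case
  proof (cases "s \<in> qbase n m")
    case False
    then show ?thesis by (simp add: mat_app_def pdeg_const)
  next
    case True
    have "pdeg n (Suc k) (\<lambda>x. \<Sum>t\<in>qbase n m. U (Suc k) s t * query_op x (qstate n m U x k) t)"
    proof (intro pdeg_sum finite_qbase pdeg_cmult)
      fix t assume t: "t \<in> qbase n m"
      obtain i b z where tt: "t = (i, b, z)" by (cases t) auto
      have "i < n" using t tt by (simp add: qbase_def)
      then have "pdeg n (Suc k) (\<lambda>x. if x!i then qstate n m U x k (i, \<not> b, z) else qstate n m U x k (i, b, z))"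
        by (intro pdeg_if Suc.IH)
      then show "pdeg n (Suc k) (\<lambda>x. query_op x (qstate n m U x k) t)"
        by (rule pdeg_cong) (auto simp: query_op_def tt)
    qed
    then show ?thesis using True by (simp add: mat_app_def)
  qed
qed

lemma pdeg_accept: "pdeg n (2 * T) (\<lambda>x. complex_of_real (accept_prob n m U Acc T x))"
proof -
  have "pdeg n (2 * T) (\<lambda>x. \<Sum>s\<in>qbase n m \<inter> Acc. qstate n m U x T s * cnj (qstate n m U x T s))"
    using pdeg_mult[OF pdeg_qstate pdeg_cnj[OF pdeg_qstate]]
    by (intro pdeg_sum) (auto simp: finite_qbase mult_2)
  then show ?thesis
    by (rule pdeg_cong) (simp add: accept_prob_def complex_norm_square[symmetric])
qed

lemma real_accept: assumes "2 * T \<le> d" shows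
  "\<exists>c. \<forall>x\<in>cube n. accept_prob n m U Acc T x = (\<Sum>S\<in>Pd n d. c S * bm S x)"
proof -
  obtain c where c: "\<forall>x\<in>cube n. complex_of_real (accept_prob n m U Acc T x) = (\<Sum>S\<in>Pd n d. c S * bm S x)"
    using pdeg_mono[OF pdeg_accept assms] unfolding pdeg_def by blast
  have fin: "\<And>S. S \<in> Pd n d \<Longrightarrow> finite S"
    by (auto simp: Pd_def intro: finite_subset)
  have "accept_prob n m U Acc T x = (\<Sum>S\<in>Pd n d. Re (c S) * bm S x)" if "x \<in> cube n" for x
  proof -
    have "accept_prob n m U Acc T x = Re (complex_of_real (accept_prob n m U Acc T x))" by simp
    also have "\<dots> = (\<Sum>S\<in>Pd n d. Re (c S * bm S x))" using c that by (simp add: Re_sum)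
    also have "\<dots> = (\<Sum>S\<in>Pd n d. Re (c S) * bm S x)"
      by (rule sum.cong) (simp_all add: bm_complex fin)
    finally show ?thesis .
  qed
  then show ?thesis by (intro exI[of _ "\<lambda>S. Re (c S)"]) blast
qed




definition shatters :: "'a set set \<Rightarrow> 'a set \<Rightarrow> bool" where
  "shatters F Y \<longleftrightarrow> (\<forall>Z\<subseteq>Y. \<exists>A\<in>F. A \<inter> Y = Z)"

lemma pajor:
  assumes "finite X" "F \<subseteq> Pow X"
  shows "card F \<le> card {Y. Y \<subseteq> X \<and> shatters F Y}"
  using assms
proof (induction X arbitrary: F rule: finite_induct)
  case empty
  then have "F \<subseteq> {{}}" by auto
  then have "F = {} \<or> F = {{}}" by auto
  then show ?case
  proof
    assume "F = {}" then show ?thesis by simp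
  next
    assume F: "F = {{}}"
    have "shatters F {}" by (simp add: shatters_def F)
    then have "{Y. Y \<subseteq> {} \<and> shatters F Y} = {{}}" by auto
    then show ?thesis using F by simp
  qed
next
  case (insert x X)
  define F0 where "F0 = (\<lambda>A. A - {x}) ` F"
  define F1 where "F1 = {A \<in> F. x \<notin> A \<and> insert x A \<in> F}"
  define Fn where "Fn = {A \<in> F. x \<notin> A}"
  define Fy where "Fy = {A \<in> F. x \<in> A}"
  have finF: "finite F" using insert.prems insert.hyps(1)
    by (meson finite_Pow_iff finite_insert finite_subset)
  have F0sub: "F0 \<subseteq> Pow X" using insert.prems by (auto simp: F0_def)
  have F1sub: "F1 \<subseteq> Pow X" using insert.prems by (auto simp: F1_def)
  have IH0: "card F0 \<le> card {Y. Y \<subseteq> X \<and> shatters F0 Y}" by (rule insert.IH[OF F0sub])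
  have IH1: "card F1 \<le> card {Y. Y \<subseteq> X \<and> shatters F1 Y}" by (rule insert.IH[OF F1sub])
  have Fsplit: "F = Fn \<union> Fy" "Fn \<inter> Fy = {}" by (auto simp: Fn_def Fy_def)
  have imn: "(\<lambda>A. A - {x}) ` Fn = (\<lambda>A. A) ` Fn" by (rule image_cong) (auto simp: Fn_def)
  have F0eq: "F0 = Fn \<union> (\<lambda>A. A - {x}) ` Fy"
    unfolding F0_def by (subst Fsplit(1)) (simp only: image_Un imn image_ident)
  have injy: "inj_on (\<lambda>A. A - {x}) Fy"
  proof (rule inj_onI)
    fix A B assume AB: "A \<in> Fy" "B \<in> Fy" "A - {x} = B - {x}"
    then have "x \<in> A" "x \<in> B" by (auto simp: Fy_def)
    then show "A = B" by (metis insert_Diff AB(3))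
  qed
  have inter: "Fn \<inter> (\<lambda>A. A - {x}) ` Fy = F1"
  proof (intro equalityI subsetI)
    fix A assume "A \<in> Fn \<inter> (\<lambda>A. A - {x}) ` Fy"
    then obtain B where "A \<in> F" "x \<notin> A" "B \<in> F" "x \<in> B" "A = B - {x}" by (auto simp: Fn_def Fy_def)
    then have "insert x A = B" by auto
    then show "A \<in> F1" using \<open>A \<in> F\<close> \<open>x \<notin> A\<close> \<open>B \<in> F\<close> by (auto simp: F1_def)
  next
    fix A assume "A \<in> F1"
    then have A: "A \<in> F" "x \<notin> A" "insert x A \<in> F" by (auto simp: F1_def)
    then have "insert x A \<in> Fy" "A = insert x A - {x}" by (auto simp: Fy_def)
    then show "A \<in> Fn \<inter> (\<lambda>A. A - {x}) ` Fy" using A by (auto simp: Fn_def)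
  qed
  have finn: "finite Fn" "finite Fy" using finF by (auto simp: Fn_def Fy_def)
  have "card F0 = card Fn + card Fy - card F1"
    unfolding F0eq using card_Un_Int[of Fn "(\<lambda>A. A - {x}) ` Fy"] finn inter card_image[OF injy]
    by simp
  moreover have "card F = card Fn + card Fy" using Fsplit finn card_Un_disjoint by metis
  moreover have "card F1 \<le> card Fn" using finn(1) inter by (metis card_mono inf_le1)
  ultimately have cardF: "card F = card F0 + card F1" by linarith
  define S0 where "S0 = {Y. Y \<subseteq> X \<and> shatters F0 Y}"
  define S1 where "S1 = {Y. Y \<subseteq> X \<and> shatters F1 Y}"
  have sub0: "S0 \<subseteq> {Y. Y \<subseteq> insert x X \<and> shatters F Y}"
  proof
    fix Y assume "Y \<in> S0"
    then have Y: "Y \<subseteq> X" "shatters F0 Y" by (auto simp: S0_def)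
    have "x \<notin> Y" using Y insert.hyps(2) by auto
    have "shatters F Y" unfolding shatters_def
    proof (intro allI impI)
      fix Z assume "Z \<subseteq> Y"
      then obtain A where "A \<in> F0" "A \<inter> Y = Z" using Y(2) unfolding shatters_def by blast
      then obtain B where "B \<in> F" "A = B - {x}" by (auto simp: F0_def)
      then show "\<exists>A\<in>F. A \<inter> Y = Z" using \<open>A \<inter> Y = Z\<close> \<open>x \<notin> Y\<close> by (intro bexI[of _ B]) auto
    qed
    then show "Y \<in> {Y. Y \<subseteq> insert x X \<and> shatters F Y}" using Y by auto
  qed
  have sub1: "insert x ` S1 \<subseteq> {Y. Y \<subseteq> insert x X \<and> shatters F Y}"
  proof
    fix Y' assume "Y' \<in> insert x ` S1"
    then obtain Y where Y: "Y \<subseteq> X" "shatters F1 Y" "Y' = insert x Y" by (auto simp: S1_def)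
    have "x \<notin> Y" using Y insert.hyps(2) by auto
    have "shatters F Y'" unfolding shatters_def
    proof (intro allI impI)
      fix Z assume Z: "Z \<subseteq> Y'"
      then have "Z - {x} \<subseteq> Y" using Y by auto
      then obtain B where B: "B \<in> F1" "B \<inter> Y = Z - {x}" using Y(2) unfolding shatters_def by blast
      then have B': "B \<in> F" "x \<notin> B" "insert x B \<in> F" by (auto simp: F1_def)
      show "\<exists>A\<in>F. A \<inter> Y' = Z"
      proof (cases "x \<in> Z")
        case True
        show ?thesis using B B' True Y(3) Z by (intro bexI[of _ "insert x B"]) auto
      next
        case False
        show ?thesis using B B' False Y(3) Z by (intro bexI[of _ B]) auto
      qed
    qed
    then show "Y' \<in> {Y. Y \<subseteq> insert x X \<and> shatters F Y}" using Y by auto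
  qed
  have disj: "S0 \<inter> insert x ` S1 = {}" using insert.hyps(2) by (auto simp: S0_def)
  have injS1: "inj_on (insert x) S1" using insert.hyps(2) unfolding S1_def inj_on_def
    by (metis (mono_tags, lifting) Diff_insert_absorb mem_Collect_eq subset_iff)
  have finS: "finite {Y. Y \<subseteq> insert x X \<and> shatters F Y}" using insert.hyps(1) by simp
  have "card S0 + card S1 = card (S0 \<union> insert x ` S1)"
    using disj card_image[OF injS1] finite_subset[OF sub0 finS] finite_subset[OF sub1 finS]
    by (simp add: card_Un_disjoint)
  also have "\<dots> \<le> card {Y. Y \<subseteq> insert x X \<and> shatters F Y}"
    using sub0 sub1 finS by (intro card_mono) auto
  finally have "card {Y. Y \<subseteq> X \<and> shatters F0 Y} + card {Y. Y \<subseteq> X \<and> shatters F1 Y}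
      \<le> card {Y. Y \<subseteq> insert x X \<and> shatters F Y}" by (simp only: S0_def S1_def)
  then show ?case using cardF IH0 IH1 by linarith
qed

lemma lin_dep:
  fixes a :: "'e \<Rightarrow> 'y \<Rightarrow> real"
  assumes "finite E" "finite Y" "card E < card Y"
  shows "\<exists>l. (\<exists>y\<in>Y. l y \<noteq> 0) \<and> (\<forall>e\<in>E. (\<Sum>y\<in>Y. a e y * l y) = 0)"
  using assms
proof (induction E arbitrary: Y a rule: finite_induct)
  case empty
  then obtain y where "y \<in> Y" by fastforce
  then show ?case by (intro exI[of _ "\<lambda>_. 1"]) auto
next
  case (insert e E)
  show ?case
  proof (cases "\<forall>y\<in>Y. a e y = 0")
    case True
    have "card E < card Y" using insert by simp
    then obtain l where l: "\<exists>y\<in>Y. l y \<noteq> 0" "\<forall>e\<in>E. (\<Sum>y\<in>Y. a e y * l y) = 0"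
      using insert.IH[OF insert.prems(1)] by blast
    then show ?thesis using True by (intro exI[of _ l]) auto
  next
    case False
    then obtain y0 where y0: "y0 \<in> Y" "a e y0 \<noteq> 0" by blast
    define Y' where "Y' = Y - {y0}"
    define a' where "a' e' y = a e' y - a e' y0 * a e y / a e y0" for e' y
    have finY': "finite Y'" using insert.prems by (simp add: Y'_def)
    have "card Y' = card Y - 1" using y0 insert.prems by (simp add: Y'_def)
    then have "card E < card Y'" using insert by simp
    then obtain l where l: "\<exists>y\<in>Y'. l y \<noteq> 0" "\<forall>e'\<in>E. (\<Sum>y\<in>Y'. a' e' y * l y) = 0"
      using insert.IH[OF finY', of a'] by blast
    define l' where "l' y = (if y = y0 then - (\<Sum>y\<in>Y'. a e y * l y) / a e y0 else l y)" for y
    have split: "(\<Sum>y\<in>Y. f y) = f y0 + (\<Sum>y\<in>Y'. f y)" for f :: "'y \<Rightarrow> real"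
      using y0 insert.prems(1) unfolding Y'_def by (simp add: sum.remove)
    have l'Y': "(\<Sum>y\<in>Y'. g y * l' y) = (\<Sum>y\<in>Y'. g y * l y)" for g
      by (rule sum.cong) (auto simp: l'_def Y'_def)
    have eq_e: "(\<Sum>y\<in>Y. a e y * l' y) = 0"
      unfolding split l'Y' using y0(2) by (simp add: l'_def)
    have eq_E: "(\<Sum>y\<in>Y. a e' y * l' y) = 0" if "e' \<in> E" for e'
    proof -
      have "(\<Sum>y\<in>Y. a e' y * l' y) = a e' y0 * l' y0 + (\<Sum>y\<in>Y'. a e' y * l y)"
        unfolding split l'Y' ..
      also have "\<dots> = (\<Sum>y\<in>Y'. a' e' y * l y)"
        using y0(2) by (simp add: l'_def a'_def algebra_simps sum_subtractf sum_distrib_left sum_divide_distrib)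
      also have "\<dots> = 0" using l(2) that by blast
      finally show ?thesis .
    qed
    have "\<exists>y\<in>Y. l' y \<noteq> 0" using l(1) by (auto simp: l'_def Y'_def)
    then show ?thesis using eq_e eq_E by (intro exI[of _ l']) auto
  qed
qed




definition thr :: "nat \<Rightarrow> nat \<Rightarrow> bool list set set" where
  "thr n d = {{x\<in>cube n. (\<Sum>S\<in>Pd n d. c S * bm S x) > (1/2::real)} | c. True}"

lemma cube_alt: "cube n = {xs. set xs \<subseteq> UNIV \<and> length xs = n}"
  by (simp add: cube_def)

lemma finite_cube: "finite (cube n)"
  unfolding cube_alt by (rule finite_lists_length_eq) simp

lemma card_cube: "card (cube n) = 2 ^ n"
  using card_lists_length_eq[of "UNIV::bool set" n] by (simp add: cube_def)

lemma thr_sub: "thr n d \<subseteq> Pow (cube n)"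
  by (auto simp: thr_def)

lemma vc:
  assumes Y: "Y \<subseteq> cube n" and sh: "shatters (thr n d) Y"
  shows "card Y \<le> card (Pd n d)"
proof (rule ccontr)
  assume "\<not> ?thesis"
  then have lt: "card (Pd n d) < card Y" by simp
  have finY: "finite Y" using Y finite_cube finite_subset by blast
  obtain l0 where l0: "\<exists>y\<in>Y. l0 y \<noteq> 0" "\<forall>S\<in>Pd n d. (\<Sum>y\<in>Y. bm S y * l0 y) = (0::real)"
    using lin_dep[OF finite_Pd finY lt, of "\<lambda>S y. bm S y"] by blast
  obtain l where l: "\<exists>y\<in>Y. l y > 0" "\<forall>S\<in>Pd n d. (\<Sum>y\<in>Y. bm S y * l y) = (0::real)"
  proof (cases "\<exists>y\<in>Y. l0 y > 0")
    case True
    then show ?thesis using that l0 by blast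
  next
    case False
    then have "\<exists>y\<in>Y. - l0 y > 0" using l0(1) by force
    moreover have "\<forall>S\<in>Pd n d. (\<Sum>y\<in>Y. bm S y * - l0 y) = (0::real)"
      using l0(2) by (simp add: sum_negf)
    ultimately show ?thesis by (intro that[of "\<lambda>y. - l0 y"]) auto
  qed
  define Z where "Z = {y\<in>Y. l y > 0}"
  have "Z \<subseteq> Y" by (auto simp: Z_def)
  then obtain A where A: "A \<in> thr n d" "A \<inter> Y = Z" using sh unfolding shatters_def by blast
  then obtain c where c: "A = {x\<in>cube n. (\<Sum>S\<in>Pd n d. c S * bm S x) > (1/2::real)}"
    by (auto simp: thr_def)
  define g where "g x = (\<Sum>S\<in>Pd n d. c S * bm S x) - (1/2::real)" for x
  have gpos: "g y > 0 \<longleftrightarrow> l y > 0" if "y \<in> Y" for y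
  proof -
    have "y \<in> A \<longleftrightarrow> y \<in> Z" using A(2) that by blast
    then show ?thesis using that Y by (auto simp: c g_def Z_def)
  qed
  have "(\<Sum>y\<in>Y. l y * g y) = (\<Sum>S\<in>Pd n d. c S * (\<Sum>y\<in>Y. bm S y * l y)) - (1/2) * (\<Sum>y\<in>Y. bm {} y * l y)"
    by (simp add: g_def algebra_simps sum_distrib_left sum_subtractf sum.swap[of _ Y] )
  also have "\<dots> = 0"
  proof -
    have "(\<Sum>y\<in>Y. bm {} y * l y) = 0" using l(2) empty_Pd by blast
    then show ?thesis using l(2) by simp
  qed
  finally have zero: "(\<Sum>y\<in>Y. l y * g y) = 0" .
  obtain y0 where y0: "y0 \<in> Y" "l y0 > 0" using l(1) by blast
  have "0 < (\<Sum>y\<in>Y. l y * g y)"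
  proof (rule sum_pos2[OF finY y0(1)])
    show "0 < l y0 * g y0" using y0 gpos by simp
    fix y assume "y \<in> Y"
    then show "0 \<le> l y * g y" using gpos[of y]
      by (cases "l y > 0") (auto intro: mult_nonpos_nonpos simp: not_less)
  qed
  then show False using zero by simp
qed

lemma card_small_subsets:
  assumes "finite A" "0 < t" "t \<le> 1"
  shows "real (card {S. S \<subseteq> A \<and> card S \<le> d}) \<le> (1 + t) ^ card A / t ^ d"
proof -
  have "real (card {S. S \<subseteq> A \<and> card S \<le> d}) = (\<Sum>S\<in>{S. S \<subseteq> A \<and> card S \<le> d}. 1)"
    by simp
  also have "\<dots> \<le> (\<Sum>S\<in>{S. S \<subseteq> A \<and> card S \<le> d}. t ^ card S / t ^ d)"
  proof (rule sum_mono)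
    fix S assume "S \<in> {S. S \<subseteq> A \<and> card S \<le> d}"
    then have "t ^ d \<le> t ^ card S" using assms by (intro power_decreasing) auto
    then show "1 \<le> t ^ card S / t ^ d" using assms by simp
  qed
  also have "\<dots> \<le> (\<Sum>S\<in>Pow A. t ^ card S / t ^ d)"
    using assms by (intro sum_mono2) auto
  also have "\<dots> = (\<Sum>S\<in>Pow A. t ^ card S) / t ^ d" by (simp add: sum_divide_distrib)
  also have "(\<Sum>S\<in>Pow A. t ^ card S) = (\<Prod>x\<in>A. t + 1)"
    using prod_add[OF assms(1), of "\<lambda>_. t" "\<lambda>_. 1"] by simp
  also have "\<dots> = (1 + t) ^ card A" by (simp add: add.commute)
  finally show ?thesis .
qed

lemma card_thr: "real (card (thr n d)) \<le> 3 * (2 ^ n) ^ card (Pd n d)"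
proof -
  define N where "N = card (cube n)"
  have N: "N = 2 ^ n" "N > 0" by (simp_all add: N_def card_cube)
  have "card (thr n d) \<le> card {Y. Y \<subseteq> cube n \<and> shatters (thr n d) Y}"
    by (rule pajor[OF finite_cube thr_sub])
  also have "\<dots> \<le> card {Y. Y \<subseteq> cube n \<and> card Y \<le> card (Pd n d)}"
    using vc by (intro card_mono) (auto simp: finite_cube)
  finally have "real (card (thr n d)) \<le> real (card {Y. Y \<subseteq> cube n \<and> card Y \<le> card (Pd n d)})"
    by linarith
  also have "\<dots> \<le> (1 + 1 / real N) ^ N / (1 / real N) ^ card (Pd n d)"
    unfolding N_def using N by (intro card_small_subsets finite_cube) (auto simp: N_def)
  also have "\<dots> = (1 + 1 / real N) ^ N * real N ^ card (Pd n d)"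
    by (simp add: power_one_over)
  also have "\<dots> \<le> 3 * real N ^ card (Pd n d)"
  proof (rule mult_right_mono)
    have "(1 + 1 / real N) ^ N \<le> exp 1"
    proof -
      have "- real N \<le> 1" by simp
      then show ?thesis using exp_ge_one_plus_x_over_n_power_n[of N 1] N by simp
    qed
    then show "(1 + 1 / real N) ^ N \<le> 3" using exp_le by linarith
  qed simp
  finally show ?thesis using N by simp
qed

lemma card_ball:
  assumes "r \<ge> 0"
  shows "card {x\<in>cube n. real (hamming n x y) \<le> r} \<le> card {S. S \<subseteq> {..<n} \<and> card S \<le> nat \<lfloor>r\<rfloor>}"
proof -
  let ?f = "\<lambda>x. {i. i < n \<and> x ! i \<noteq> y ! i}"
  have inj: "inj_on ?f {x\<in>cube n. real (hamming n x y) \<le> r}"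
  proof (rule inj_onI)
    fix x x' assume x: "x \<in> {x\<in>cube n. real (hamming n x y) \<le> r}"
      and x': "x' \<in> {x\<in>cube n. real (hamming n x y) \<le> r}" and eq: "?f x = ?f x'"
    have "x ! i = x' ! i" if "i < n" for i
    proof -
      have "(x ! i \<noteq> y ! i) = (x' ! i \<noteq> y ! i)" using eq that by blast
      then show ?thesis by blast
    qed
    then show "x = x'" using x x' by (intro nth_equalityI) (auto simp: cube_def)
  qed
  have img: "?f ` {x\<in>cube n. real (hamming n x y) \<le> r} \<subseteq> {S. S \<subseteq> {..<n} \<and> card S \<le> nat \<lfloor>r\<rfloor>}"
  proof
    fix S assume "S \<in> ?f ` {x\<in>cube n. real (hamming n x y) \<le> r}"
    then obtain x where x: "real (hamming n x y) \<le> r" "S = ?f x" by blast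
    have "card S \<le> nat \<lfloor>r\<rfloor>" using x unfolding hamming_def
      by (metis le_nat_floor of_nat_le_iff floor_of_nat nat_int le_floor_iff)
    then show "S \<in> {S. S \<subseteq> {..<n} \<and> card S \<le> nat \<lfloor>r\<rfloor>}" using x by auto
  qed
  show ?thesis
    using card_inj_on_le[OF inj img] by simp
qed




lemma exp_le_2powr: fixes x :: real assumes "0 \<le> x" shows "exp x \<le> 2 powr (2 * x)"
proof -
  have e: "exp (1/2) * exp (1/2) = exp (1::real)" by (simp flip: exp_add)
  have "exp (1/2) \<le> (2::real)"
  proof (rule ccontr)
    assume "\<not> ?thesis"
    then have "2 * 2 < exp (1/2) * exp (1/2::real)" by (intro mult_strict_mono) auto
    then show False using e exp_le by simp
  qed
  then have "ln (exp (1/2)) \<le> ln (2::real)" by (subst ln_le_cancel_iff) auto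
  then have l: "1/2 \<le> ln (2::real)" by simp
  have "exp x \<le> exp (2 * x * ln 2)" using l assms by (intro exp_mono) (simp add: mult_left_mono[of "1/2" "ln 2" "2*x", simplified])
  also have "\<dots> = 2 powr (2 * x)" by (simp add: powr_def)
  finally show ?thesis .
qed

lemma one_plus_pow: assumes "a > 0" shows "(1 + 1 / a) ^ n \<le> 2 powr (2 * real n / a)"
proof (cases "n = 0")
  case True then show ?thesis by simp
next
  case False
  have "(1 + 1 / a) ^ n = (1 + (real n / a) / real n) ^ n" using False by simp
  also have "\<dots> \<le> exp (real n / a)"
  proof (rule exp_ge_one_plus_x_over_n_power_n)
    have "0 \<le> real n / a" using assms by simp
    then show "- real n \<le> real n / a" by linarith
  qed (use False in auto)
  also have "\<dots> \<le> 2 powr (2 * (real n / a))" using assms by (intro exp_le_2powr) simp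
  finally show ?thesis by simp
qed

lemma D_bound: "real (card (Pd n (2 * (n div 400)))) \<le> 2 powr (153 * real n / 3200)"
proof -
  let ?d = "2 * (n div 400)"
  have "real (card (Pd n ?d)) \<le> (1 + 1/256) ^ card {..<n} / (1/256) ^ ?d"
    unfolding Pd_def by (rule card_small_subsets) auto
  also have "\<dots> = (1 + 1/256) ^ n * 256 ^ ?d" by (simp add: power_one_over)
  also have "\<dots> \<le> 2 powr (2 * real n / 256) * 2 powr (real n / 25)"
  proof (rule mult_mono)
    show "(1 + 1/256) ^ n \<le> 2 powr (2 * real n / 256)" using one_plus_pow[of 256 n] by simp
    have "(256::real) ^ ?d = 2 ^ (8 * ?d)" by (subst power_mult) simp
    also have "\<dots> = 2 powr (real (8 * ?d))" by (rule powr_realpow[symmetric]) simp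
    also have "\<dots> \<le> 2 powr (real n / 25)"
    proof (rule powr_mono)
      have "real (n div 400) \<le> real n / real (400::nat)"
        by (rule of_nat_div_le_of_nat)
      then show "real (8 * ?d) \<le> real n / 25" by simp
    qed simp
    finally show "(256::real) ^ ?d \<le> 2 powr (real n / 25)" .
  qed simp_all
  also have "\<dots> = 2 powr (153 * real n / 3200)" by (simp flip: powr_add)
  finally show ?thesis .
qed

lemma B_bound:
  assumes "0 \<le> \<epsilon>" "\<epsilon> \<le> 1/100"
  shows "real (card {S. S \<subseteq> {..<n} \<and> card S \<le> nat \<lfloor>\<epsilon> * real n\<rfloor>}) \<le> 2 powr (28 * real n / 100)"
proof -
  let ?r = "nat \<lfloor>\<epsilon> * real n\<rfloor>"
  have "real (card {S. S \<subseteq> {..<n} \<and> card S \<le> ?r}) \<le> (1 + 1/8) ^ card {..<n} / (1/8) ^ ?r"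
    by (rule card_small_subsets) auto
  also have "\<dots> = (1 + 1/8) ^ n * 8 ^ ?r" by (simp add: power_one_over)
  also have "\<dots> \<le> 2 powr (2 * real n / 8) * 2 powr (3 * real n / 100)"
  proof (rule mult_mono)
    show "(1 + 1/8) ^ n \<le> 2 powr (2 * real n / 8)" using one_plus_pow[of 8 n] by simp
    have "(8::real) ^ ?r = 2 ^ (3 * ?r)" by (subst power_mult) simp
    also have "\<dots> = 2 powr (real (3 * ?r))" by (rule powr_realpow[symmetric]) simp
    also have "\<dots> \<le> 2 powr (3 * real n / 100)"
    proof (rule powr_mono)
      have "real ?r \<le> \<epsilon> * real n" using assms by (simp add: of_nat_floor)
      also have "\<dots> \<le> (1/100) * real n" using assms by (intro mult_right_mono) auto
      finally show "real (3 * ?r) \<le> 3 * real n / 100" by simp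
    qed simp
    finally show "(8::real) ^ ?r \<le> 2 powr (3 * real n / 100)" .
  qed simp_all
  also have "\<dots> = 2 powr (28 * real n / 100)" by (simp flip: powr_add)
  finally show ?thesis .
qed




lemma choose_le_pow: "n choose k \<le> n ^ k"
  by (cases "k \<le> n") (auto simp: binomial_le_pow binomial_eq_0)

lemma count_bound:
  assumes eps: "0 < \<epsilon>" and n: "n > 0"
  defines "K \<equiv> (2::nat) ^ (n div 20)"
  defines "d0 \<equiv> 2 * (n div 400)"
  defines "B \<equiv> card {S. S \<subseteq> {..<n} \<and> card S \<le> nat \<lfloor>\<epsilon> * real n\<rfloor>}"
  shows "card {P \<in> props_of_size n K. has_tester_with_queries n P \<epsilon> (real n / 400)}
           \<le> card (thr n d0) * (K * B) ^ K"
proof -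
  define Tst where "Tst = {P \<in> props_of_size n K. has_tester_with_queries n P \<epsilon> (real n / 400)}"
  define F' where "F' = {S \<in> thr n d0. card S \<le> K * B}"
  have ballB: "card {x\<in>cube n. real (hamming n x y) \<le> \<epsilon> * real n} \<le> B" for y
    unfolding B_def using eps by (intro card_ball) simp
  have subU: "Tst \<subseteq> (\<Union>S\<in>F'. {P. P \<subseteq> S \<and> card P = K})"
  proof
    fix P assume "P \<in> Tst"
    then have P: "P \<subseteq> cube n" "card P = K" "has_tester_with_queries n P \<epsilon> (real n / 400)"
      by (auto simp: Tst_def props_of_size_def)
    then obtain m U Acc T where T: "real T \<le> real n / 400" and qt: "quantum_tester n P \<epsilon> m U Acc T"
      by (auto simp: has_tester_with_queries_def)
    have "real (400 * T) \<le> real n" using T by simp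
    then have "400 * T \<le> n" by linarith
    then have "T \<le> n div 400" using div_le_mono[of "400 * T" n 400] by simp
    then have Td: "2 * T \<le> d0" by (simp add: d0_def)
    obtain c where c: "\<forall>x\<in>cube n. accept_prob n m U Acc T x = (\<Sum>S\<in>Pd n d0. c S * bm S x)"
      using real_accept[OF Td] by blast
    define S where "S = {x\<in>cube n. (\<Sum>S\<in>Pd n d0. c S * bm S x) > (1/2::real)}"
    have Sthr: "S \<in> thr n d0" unfolding thr_def S_def by blast
    have S_eq: "S = {x\<in>cube n. accept_prob n m U Acc T x > 1/2}" using c by (auto simp: S_def)
    have PS: "P \<subseteq> S"
    proof
      fix x assume "x \<in> P"
      then have "x \<in> cube n" "accept_prob n m U Acc T x \<ge> 2/3"
        using qt P(1) by (auto simp: quantum_tester_def)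
      then show "x \<in> S" by (simp add: S_eq)
    qed
    have SU: "S \<subseteq> (\<Union>y\<in>P. {x\<in>cube n. real (hamming n x y) \<le> \<epsilon> * real n})"
    proof
      fix x assume "x \<in> S"
      then have x: "x \<in> cube n" "accept_prob n m U Acc T x > 1/2" by (auto simp: S_eq)
      have "\<not> eps_far n \<epsilon> P x"
      proof
        assume "eps_far n \<epsilon> P x"
        then have "accept_prob n m U Acc T x \<le> 1/3" using qt x(1) by (auto simp: quantum_tester_def)
        then show False using x(2) by simp
      qed
      then show "x \<in> (\<Union>y\<in>P. {x\<in>cube n. real (hamming n x y) \<le> \<epsilon> * real n})"
        using x(1) by (auto simp: eps_far_def not_less)
    qed
    have finP: "finite P" using P(1) finite_cube finite_subset by blast
    have "card S \<le> card (\<Union>y\<in>P. {x\<in>cube n. real (hamming n x y) \<le> \<epsilon> * real n})"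
      using SU by (intro card_mono) (auto intro: finite_subset[OF _ finite_cube])
    also have "\<dots> \<le> (\<Sum>y\<in>P. card {x\<in>cube n. real (hamming n x y) \<le> \<epsilon> * real n})"
      by (rule card_UN_le[OF finP])
    also have "\<dots> \<le> (\<Sum>y\<in>P. B)" using ballB by (intro sum_mono) auto
    also have "\<dots> = K * B" using P(2) by simp
    finally have "card S \<le> K * B" .
    then show "P \<in> (\<Union>S\<in>F'. {P. P \<subseteq> S \<and> card P = K})"
      using Sthr PS P(2) by (auto simp: F'_def)
  qed
  have finthr: "finite (thr n d0)" using thr_sub finite_cube
    by (meson finite_Pow_iff finite_subset)
  have finF': "finite F'" using finthr by (auto simp: F'_def)
  have finS: "finite S" if "S \<in> F'" for S
    using that thr_sub[of n d0] finite_cube by (auto simp: F'_def intro: finite_subset)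
  have "card Tst \<le> card (\<Union>S\<in>F'. {P. P \<subseteq> S \<and> card P = K})"
    using subU finF' finS by (intro card_mono finite_UN_I) auto
  also have "\<dots> \<le> (\<Sum>S\<in>F'. card {P. P \<subseteq> S \<and> card P = K})"
    by (rule card_UN_le[OF finF'])
  also have "\<dots> \<le> (\<Sum>S\<in>F'. (K * B) ^ K)"
  proof (rule sum_mono)
    fix S assume S: "S \<in> F'"
    have "card {P. P \<subseteq> S \<and> card P = K} = card S choose K" by (rule n_subsets[OF finS[OF S]])
    also have "\<dots> \<le> card S ^ K" by (rule choose_le_pow)
    also have "\<dots> \<le> (K * B) ^ K" using S by (intro power_mono) (auto simp: F'_def)
    finally show "card {P. P \<subseteq> S \<and> card P = K} \<le> (K * B) ^ K" .
  qed
  also have "\<dots> = card F' * (K * B) ^ K" by simp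
  also have "\<dots> \<le> card (thr n d0) * (K * B) ^ K"
    using finthr by (intro mult_right_mono card_mono) (auto simp: F'_def)
  finally show ?thesis unfolding Tst_def .
qed




lemma p4: "(2::real) powr a * 2 powr b * 2 powr c / 2 powr d = 2 powr (a + b + c - d)"
  by (simp add: powr_add powr_diff)

lemma ratio_bound:
  assumes eps: "0 < \<epsilon>" "\<epsilon> \<le> 1/100" and n: "n > 0"
  shows "real (card {P \<in> props_of_size n (2 ^ (n div 20)). has_tester_with_queries n P \<epsilon> (real n / 400)})
           / real (card (props_of_size n (2 ^ (n div 20))))
         \<le> 3 * 2 powr (real n * 2 powr (153 * real n / 3200) - real n / 4 * 2 powr (real n / 20))"
proof -
  define K where "K = (2::nat) ^ (n div 20)"
  define d0 where "d0 = 2 * (n div 400)"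
  define B where "B = card {S. S \<subseteq> {..<n} \<and> card S \<le> nat \<lfloor>\<epsilon> * real n\<rfloor>}"
  define t where "t = card {P \<in> props_of_size n K. has_tester_with_queries n P \<epsilon> (real n / 400)}"
  define D where "D = card (Pd n d0)"
  have ct: "real t \<le> real (card (thr n d0)) * (real K * real B) ^ K"
  proof -
    have "t \<le> card (thr n d0) * (K * B) ^ K"
      using count_bound[OF eps(1) n] unfolding t_def K_def d0_def B_def by simp
    then have "real t \<le> real (card (thr n d0) * (K * B) ^ K)" by (simp only: of_nat_le_iff)
    then show ?thesis by simp
  qed
  have cardP: "card (props_of_size n K) = 2 ^ n choose K"
    unfolding props_of_size_def using n_subsets[OF finite_cube, of n K] by (simp add: card_cube)
  have KN: "K \<le> 2 ^ n" unfolding K_def by (intro power_increasing) auto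
  have Kpos: "K > 0" by (simp add: K_def)
  have lowP: "(real (2 ^ n) / real K) ^ K \<le> real (card (props_of_size n K))"
    unfolding cardP using binomial_ge_n_over_k_pow_k[OF KN] by simp
  have lowpos: "0 < (real (2 ^ n) / real K) ^ K" using Kpos by simp
  have k_eq: "real K = 2 powr real (n div 20)" unfolding K_def by (simp add: powr_realpow)
  have k_up: "real K \<le> 2 powr (real n / 20)"
  proof -
    have "real (n div 20) \<le> real n / real (20::nat)" by (rule of_nat_div_le_of_nat)
    then show ?thesis unfolding k_eq by (intro powr_mono) simp_all
  qed
  have "real n / 20 - 1 \<le> real (n div 20)"
  proof -
    have "n mod 20 < 20" by simp
    moreover have "n = 20 * (n div 20) + n mod 20" by simp
    ultimately have "n \<le> 20 * (n div 20) + 20" by linarith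
    then have "real n \<le> real (20 * (n div 20) + 20)" by (simp only: of_nat_le_iff)
    then show ?thesis by simp
  qed
  then have k_low: "2 powr (real n / 20 - 1) \<le> real K"
    unfolding k_eq by (rule powr_mono) simp
  have b_up: "real B \<le> 2 powr (28 * real n / 100)" unfolding B_def using eps by (intro B_bound) auto
  have D_up: "real D \<le> 2 powr (153 * real n / 3200)" unfolding D_def d0_def by (rule D_bound)
  define q where "q = real K * real K * real B / 2 ^ n"
  have q0: "0 \<le> q" by (simp add: q_def)
  have "q \<le> 2 powr (real n / 20) * 2 powr (real n / 20) * 2 powr (28 * real n / 100) / 2 powr real n"
    unfolding q_def
    by (intro divide_mono mult_mono k_up b_up) (simp_all add: powr_realpow)
  also have "\<dots> = 2 powr (real n / 20 + real n / 20 + 28 * real n / 100 - real n)"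
    by (rule p4)
  also have "\<dots> \<le> 2 powr (- real n / 2)" by (rule powr_mono) auto
  finally have q_up: "q \<le> 2 powr (- real n / 2)" .
  have "real t / real (card (props_of_size n K)) \<le>
        (real (card (thr n d0)) * (real K * real B) ^ K) / (real (2 ^ n) / real K) ^ K"
    by (rule frac_le[OF _ ct lowpos lowP]) simp
  also have "\<dots> = real (card (thr n d0)) * q ^ K"
    using Kpos by (simp add: q_def power_divide power_mult_distrib field_simps)
  also have "\<dots> \<le> (3 * 2 powr (real n * 2 powr (153 * real n / 3200))) * 2 powr (- (real n / 4 * 2 powr (real n / 20)))"
  proof (rule mult_mono)
    have "real (card (thr n d0)) \<le> 3 * (2 ^ n) ^ D" unfolding D_def by (rule card_thr)
    also have "((2::real) ^ n) ^ D = 2 ^ (n * D)" by (simp add: power_mult)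
    also have "\<dots> = 2 powr real (n * D)" by (rule powr_realpow[symmetric]) simp
    also have "\<dots> = 2 powr (real n * real D)" by simp
    also have "\<dots> \<le> 2 powr (real n * 2 powr (153 * real n / 3200))"
      using D_up by (intro powr_mono mult_left_mono) auto
    finally show "real (card (thr n d0)) \<le> 3 * 2 powr (real n * 2 powr (153 * real n / 3200))"
      by simp
    have "q ^ K \<le> (2 powr (- real n / 2)) ^ K" by (intro power_mono q_up q0)
    also have "\<dots> = 2 powr (real K * (- real n / 2))" by (simp add: powr_power)
    also have "\<dots> \<le> 2 powr (- (real n / 4 * 2 powr (real n / 20)))"
    proof (rule powr_mono)
      have "2 powr (real n / 20 - 1) * (real n / 2) \<le> real K * (real n / 2)"
        by (intro mult_right_mono k_low) simp
      moreover have "2 powr (real n / 20 - 1) = 2 powr (real n / 20) / 2" by (simp add: powr_diff)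
      ultimately show "real K * (- real n / 2) \<le> - (real n / 4 * 2 powr (real n / 20))"
        by simp
    qed simp
    finally show "q ^ K \<le> 2 powr (- (real n / 4 * 2 powr (real n / 20)))" .
  qed (simp_all add: q0)
  also have "\<dots> = 3 * 2 powr (real n * 2 powr (153 * real n / 3200) - real n / 4 * 2 powr (real n / 20))"
    by (simp add: powr_add[symmetric])
  finally show ?thesis unfolding t_def K_def .
qed

theorem theorem5p1:
  shows "\<exists>\<epsilon>\<^sub>0 > (0::real). \<forall>\<epsilon>. 0 < \<epsilon> \<and> \<epsilon> \<le> \<epsilon>\<^sub>0 \<longrightarrow>
    (\<lambda>n. real (card {P \<in> props_of_size n (2 ^ (n div 20)).
                         has_tester_with_queries n P \<epsilon> (real n / 400)})
         / real (card (props_of_size n (2 ^ (n div 20)))))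
    \<longlonglongrightarrow> 0"
proof (intro exI[of _ "1/100"] conjI allI impI)
  fix \<epsilon> :: real assume e: "0 < \<epsilon> \<and> \<epsilon> \<le> 1/100"
  have lim: "(\<lambda>n::nat. 3 * 2 powr (real n * 2 powr (153*real n/3200) - real n/4 * 2 powr (real n/20))) \<longlonglongrightarrow> 0"
    by real_asymp
  show "(\<lambda>n. real (card {P \<in> props_of_size n (2 ^ (n div 20)).
                         has_tester_with_queries n P \<epsilon> (real n / 400)})
         / real (card (props_of_size n (2 ^ (n div 20)))))
    \<longlonglongrightarrow> 0"
  proof (rule tendsto_sandwich[OF _ _ tendsto_const lim])
    show "\<forall>\<^sub>F n in sequentially. 0 \<le> real (card {P \<in> props_of_size n (2 ^ (n div 20)).
                         has_tester_with_queries n P \<epsilon> (real n / 400)})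
         / real (card (props_of_size n (2 ^ (n div 20))))" by simp
    show "\<forall>\<^sub>F n in sequentially. (real (card {P \<in> props_of_size n (2 ^ (n div 20)).
                         has_tester_with_queries n P \<epsilon> (real n / 400)})
         / real (card (props_of_size n (2 ^ (n div 20)))))
      \<le> 3 * 2 powr (real n * 2 powr (153*real n/3200) - real n/4 * 2 powr (real n/20))"
      using eventually_gt_at_top[of 0]
    proof eventually_elim
      case (elim n)
      then show ?case using ratio_bound[of \<epsilon> n] e by simp
    qed
  qed
qed simp


end
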